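(* For each $u\in(0,1)$, $\phi(u)=(\mathcal E^c_u)'(G(u)-)=(\mathcal E^c_u)'(S(u)-)$.
   Context: Let $\mu,\nu$ be probability measures on $\mathbb R$ with finite first moments and $\mu\le_{cx}\nu$. Put $P_\eta(k)=\int(k-x)^+\eta(dx)$, $D=P_\nu-P_\mu$, and assume $\{k:D(k)>0\}$ is an interval. Let $G$ be any quantile function of $\mu$. For $u\in(0,1)$ let $\mu_u(A)=\mu(A\cap(-\infty,G(u)))+\big(u-\mu((-\infty,G(u)))\big)\delta_{G(u)}(A)$ and $\mathcal E_u=P_\nu-P_{\mu_u}$. $f^c$ is the largest convex minorant of $f$; $Z^f(y)=\inf\{z\ge y: f^c(z)=f(z)\}$. Define $S(u)=Z^{\mathcal E_u}(G(u))$ and $\phi(u)=\inf\partial\mathcal E_u^c(G(u))$ (subdifferential). $h'(x-)$ denotes the left derivative. *)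

theory Defs
  imports "HOL-Probability.Probability"
begin

definition put_fn :: "real measure \<Rightarrow> real \<Rightarrow> real" where
  "put_fn \<eta> k = (\<integral>x. max 0 (k - x) \<partial>\<eta>)"

definition cx_le :: "real measure \<Rightarrow> real measure \<Rightarrow> bool" where
  "cx_le \<mu> \<nu> \<longleftrightarrow> (\<forall>f::real \<Rightarrow> real. convex_on UNIV f \<longrightarrow> integrable \<mu> f \<longrightarrow> integrable \<nu> f
        \<longrightarrow> (\<integral>x. f x \<partial>\<mu>) \<le> (\<integral>x. f x \<partial>\<nu>))"

definition is_quantile :: "real measure \<Rightarrow> (real \<Rightarrow> real) \<Rightarrow> bool" where
  "is_quantile \<mu> G \<longleftrightarrow> (\<forall>u\<in>{0<..<1}. measure \<mu> {..<G u} \<le> u \<and> u \<le> measure \<mu> {..G u})"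

definition mu_u :: "real measure \<Rightarrow> (real \<Rightarrow> real) \<Rightarrow> real \<Rightarrow> real measure" where
  "mu_u \<mu> G u = measure_of UNIV (sets borel)
     (\<lambda>A. emeasure \<mu> (A \<inter> {..<G u}) + ennreal (u - measure \<mu> {..<G u}) * indicator A (G u))"

definition conv_minorant :: "(real \<Rightarrow> real) \<Rightarrow> real \<Rightarrow> real" where
  "conv_minorant f x = Sup {g x | g. convex_on UNIV g \<and> (\<forall>y. g y \<le> f y)}"

definition Zf :: "(real \<Rightarrow> real) \<Rightarrow> real \<Rightarrow> real" where
  "Zf f y = Inf {z. z \<ge> y \<and> conv_minorant f z = f z}"

definition subdiff :: "(real \<Rightarrow> real) \<Rightarrow> real \<Rightarrow> real set" where
  "subdiff g x = {s. \<forall>z. g z \<ge> g x + s * (z - x)}"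

definition E_u :: "real measure \<Rightarrow> real measure \<Rightarrow> (real \<Rightarrow> real) \<Rightarrow> real \<Rightarrow> real \<Rightarrow> real" where
  "E_u \<mu> \<nu> G u k = put_fn \<nu> k - put_fn (mu_u \<mu> G u) k"

end

theory Submission
  imports Defs
begin


lemma cm_ge:
  assumes "convex_on UNIV g" "\<And>y. g y \<le> f y"
  shows "g x \<le> conv_minorant f x"
  unfolding conv_minorant_def
  by (rule cSup_upper) (use assms in \<open>auto intro!: bdd_aboveI[where M="f x"]\<close>)

lemma cm_le:
  assumes "convex_on UNIV g0" "\<And>y. g0 y \<le> f y"
  shows "conv_minorant f x \<le> f x"
  unfolding conv_minorant_def
  by (rule cSup_least) (use assms in auto)

lemma cm_convex:
  assumes "convex_on UNIV g0" "\<And>y. g0 y \<le> f y"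
  shows "convex_on UNIV (conv_minorant f)"
  unfolding convex_on_def
proof (intro conjI ballI allI impI)
  fix x y :: real and a b :: real
  assume ab: "0 \<le> a" "0 \<le> b" "a + b = 1"
  show "conv_minorant f (a *\<^sub>R x + b *\<^sub>R y) \<le> a * conv_minorant f x + b * conv_minorant f y"
    unfolding conv_minorant_def[of f "a *\<^sub>R x + b *\<^sub>R y"]
  proof (rule cSup_least)
    show "{g (a *\<^sub>R x + b *\<^sub>R y) |g. convex_on UNIV g \<and> (\<forall>y. g y \<le> f y)} \<noteq> {}"
      using assms by auto
  next
    fix z assume "z \<in> {g (a *\<^sub>R x + b *\<^sub>R y) |g. convex_on UNIV g \<and> (\<forall>y. g y \<le> f y)}"
    then obtain g where g: "convex_on UNIV g" "\<forall>y. g y \<le> f y" "z = g (a *\<^sub>R x + b *\<^sub>R y)" by auto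
    have "z \<le> a * g x + b * g y" using g ab unfolding convex_on_def by auto
    also have "\<dots> \<le> a * conv_minorant f x + b * conv_minorant f y"
      using cm_ge[of g f] g ab by (intro add_mono mult_left_mono) auto
    finally show "z \<le> a * conv_minorant f x + b * conv_minorant f y" .
  qed
qed simp

lemma convex_on_max2:
  assumes "convex_on UNIV f" "convex_on UNIV (g::real\<Rightarrow>real)"
  shows "convex_on UNIV (\<lambda>x. max (f x) (g x))"
  unfolding convex_on_def
proof (intro conjI ballI allI impI)
  fix x y :: real and a b :: real
  assume ab: "0 \<le> a" "0 \<le> b" "a + b = 1"
  have "f (a *\<^sub>R x + b *\<^sub>R y) \<le> a * f x + b * f y" "g (a *\<^sub>R x + b *\<^sub>R y) \<le> a * g x + b * g y"
    using assms ab unfolding convex_on_def by auto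
  moreover have "a * f x + b * f y \<le> a * max (f x) (g x) + b * max (f y) (g y)"
    "a * g x + b * g y \<le> a * max (f x) (g x) + b * max (f y) (g y)"
    using ab by (intro add_mono mult_left_mono; simp)+
  ultimately show "max (f (a *\<^sub>R x + b *\<^sub>R y)) (g (a *\<^sub>R x + b *\<^sub>R y))
       \<le> a * max (f x) (g x) + b * max (f y) (g y)" by linarith
qed simp

lemma convex_on_affine: "convex_on UNIV (\<lambda>x::real. a * x + b)"
  unfolding convex_on_def
proof (intro conjI ballI allI impI)
  fix x y :: real and u v :: real
  assume "0 \<le> u" "0 \<le> v" "u + v = 1"
  then have "b = u * b + v * b" by (metis distrib_right mult_1)
  then show "a * (u *\<^sub>R x + v *\<^sub>R y) + b \<le> u * (a * x + b) + v * (a * y + b)"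
    by (simp add: algebra_simps)
qed simp

lemma swap_div: "((a::real) - b) / (c - d) = (b - a) / (d - c)"
  by (metis minus_diff_eq minus_divide_divide)

lemma slope3:
  fixes f :: "real \<Rightarrow> real"
  assumes cv: "convex_on UNIV f" and "x < t" "t < y"
  shows "(f t - f x) / (t - x) \<le> (f y - f x) / (y - x)"
    and "(f y - f x) / (y - x) \<le> (f y - f t) / (y - t)"
  using convex_on_slope_le[OF cv, of x y t] assms by (simp_all add: swap_div)

lemma left_deriv:
  fixes \<Phi> :: "real \<Rightarrow> real"
  assumes cv: "convex_on UNIV \<Phi>"
  shows "((\<lambda>y. (\<Phi> y - \<Phi> c) / (y - c)) \<longlongrightarrow> Inf (subdiff \<Phi> c)) (at_left c)"
proof -
  define q where "q y = (\<Phi> y - \<Phi> c) / (y - c)" for y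
  have mono: "q y1 \<le> q y2" if "y1 < y2" "y2 < c" for y1 y2
  proof -
    have "(\<Phi> c - \<Phi> y1) / (c - y1) \<le> (\<Phi> c - \<Phi> y2) / (c - y2)"
      using slope3(2)[OF cv that] .
    then show ?thesis unfolding q_def by (simp add: swap_div)
  qed
  have bnd: "q y \<le> q z" if "y < c" "c < z" for y z
  proof -
    have "(\<Phi> c - \<Phi> y) / (c - y) \<le> (\<Phi> z - \<Phi> y) / (z - y)"
      using slope3(1)[OF cv that] .
    also have "\<dots> \<le> (\<Phi> z - \<Phi> c) / (z - c)"
      using slope3(2)[OF cv that] .
    finally show ?thesis unfolding q_def by (simp add: swap_div)
  qed
  define lam where "lam = Sup (q ` {..<c})"
  have bdd: "bdd_above (q ` {..<c})"
    using bnd[of _ "c+1"] by (intro bdd_aboveI[where M="q (c+1)"]) auto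
  have qle: "q y \<le> lam" if "y < c" for y
    unfolding lam_def using bdd that by (intro cSup_upper) auto
  have lim: "(q \<longlongrightarrow> lam) (at_left c)"
  proof (rule order_tendstoI)
    fix a assume "a < lam"
    then obtain y0 where y0: "y0 < c" "a < q y0"
      unfolding lam_def using less_cSup_iff[OF _ bdd, of a] by auto
    show "eventually (\<lambda>y. a < q y) (at_left c)"
      unfolding eventually_at_left_field
      using y0 mono by (meson less_le_trans)
  next
    fix a assume "lam < a"
    then show "eventually (\<lambda>y. q y < a) (at_left c)"
      unfolding eventually_at_left_field using qle
      by (intro exI[of _ "c - 1"]) (auto intro: le_less_trans[OF qle])
  qed
  have mem: "lam \<in> subdiff \<Phi> c"
    unfolding subdiff_def
  proof (safe)
    fix z
    show "\<Phi> c + lam * (z - c) \<le> \<Phi> z"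
    proof (cases z c rule: linorder_cases)
      case less
      then have "q z \<le> lam" by (rule qle)
      then have "(\<Phi> z - \<Phi> c) / (z - c) \<le> lam" unfolding q_def .
      then have "lam * (z - c) \<le> \<Phi> z - \<Phi> c" using less by (simp add: divide_le_eq mult.commute)
      then show ?thesis by simp
    next
      case greater
      have "lam \<le> q z" unfolding lam_def
        by (rule cSup_least) (use greater bnd in auto)
      then have "lam \<le> (\<Phi> z - \<Phi> c) / (z - c)" unfolding q_def .
      then have "lam * (z - c) \<le> \<Phi> z - \<Phi> c" using greater by (simp add: le_divide_eq)
      then show ?thesis by simp
    qed simp
  qed
  have least: "lam \<le> s" if "s \<in> subdiff \<Phi> c" for s
    unfolding lam_def
  proof (rule cSup_least)
    show "q ` {..<c} \<noteq> {}" by auto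
  next
    fix x assume "x \<in> q ` {..<c}"
    then obtain y where y: "y < c" "x = q y" by auto
    have "\<Phi> c + s * (y - c) \<le> \<Phi> y" using that unfolding subdiff_def by auto
    then have "(\<Phi> y - \<Phi> c) / (y - c) \<le> s" using y by (simp add: divide_le_eq mult.commute)
    then show "x \<le> s" using y unfolding q_def by simp
  qed
  have "Inf (subdiff \<Phi> c) = lam"
    by (rule cInf_eq_minimum) (use mem least in auto)
  then show ?thesis using lim unfolding q_def by simp
qed



lemma AL:
  fixes E \<Phi> :: "real \<Rightarrow> real"
  assumes cv: "convex_on UNIV \<Phi>" and contE: "continuous_on UNIV E"
    and PhiE: "\<And>x. \<Phi> x \<le> E x"
    and maxi: "\<And>g x. convex_on UNIV g \<Longrightarrow> (\<forall>y. g y \<le> E y) \<Longrightarrow> g x \<le> \<Phi> x"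
    and pq: "p < q" and strict: "\<And>x. p \<le> x \<Longrightarrow> x \<le> q \<Longrightarrow> \<Phi> x < E x"
    and x: "p \<le> x" "x \<le> q"
  shows "\<Phi> x = \<Phi> p + (\<Phi> q - \<Phi> p) / (q - p) * (x - p)"
proof -
  define m where "m = (\<Phi> q - \<Phi> p) / (q - p)"
  define l where "l x = \<Phi> p + m * (x - p)" for x
  have up: "\<Phi> z \<le> l z" if "p \<le> z" "z \<le> q" for z
  proof -
    have "convex_on {p..q} \<Phi>" by (rule convex_on_subset[OF cv]) auto
    from convex_onD_Icc'[OF this, of z] that show ?thesis
      unfolding l_def m_def by (simp add: algebra_simps)
  qed
  have out: "l z \<le> \<Phi> z" if "z < p \<or> q < z" for z
    using that
  proof
    assume z: "z < p"
    have "(\<Phi> p - \<Phi> z) / (p - z) \<le> (\<Phi> q - \<Phi> z) / (q - z)" using slope3(1)[OF cv z pq] .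
    also have "\<dots> \<le> m" unfolding m_def using slope3(2)[OF cv z pq] .
    finally have "\<Phi> p - \<Phi> z \<le> m * (p - z)" using z by (simp add: divide_le_eq mult.commute)
    then show ?thesis unfolding l_def by (simp add: algebra_simps)
  next
    assume z: "q < z"
    have "m \<le> (\<Phi> z - \<Phi> p) / (z - p)" unfolding m_def using slope3(1)[OF cv pq z] .
    then have "m * (z - p) \<le> \<Phi> z - \<Phi> p" using z pq by (simp add: le_divide_eq)
    then show ?thesis unfolding l_def by (simp add: algebra_simps)
  qed
  have contl: "continuous_on UNIV (\<lambda>x. l x - E x)"
    unfolding l_def by (intro continuous_intros contE)
  have "\<exists>y\<in>{p..q}. \<forall>z\<in>{p..q}. l z - E z \<le> l y - E y"
    by (rule continuous_attains_sup) (use pq continuous_on_subset[OF contl] in auto)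
  then obtain y0 where y0: "y0 \<in> {p..q}" "\<And>y. y \<in> {p..q} \<Longrightarrow> l y - E y \<le> l y0 - E y0"
    by blast
  define t0 where "t0 = max 0 (l y0 - E y0)"
  define g where "g x = max (\<Phi> x) (l x - t0)" for x
  have "(\<lambda>x. l x - t0) = (\<lambda>x. m * x + (\<Phi> p - m * p - t0))"
    unfolding l_def by (auto simp: algebra_simps)
  then have "convex_on UNIV (\<lambda>x. l x - t0)" using convex_on_affine by simp
  then have cg: "convex_on UNIV g" unfolding g_def by (intro convex_on_max2 cv)
  have gE: "\<forall>y. g y \<le> E y"
  proof
    fix y
    show "g y \<le> E y"
    proof (cases "p \<le> y \<and> y \<le> q")
      case True
      then have "l y - E y \<le> l y0 - E y0" using y0 by auto
      then show ?thesis unfolding g_def t0_def using PhiE[of y] by auto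
    next
      case False
      then have "l y \<le> \<Phi> y" using out by auto
      then show ?thesis unfolding g_def t0_def using PhiE[of y] by auto
    qed
  qed
  have lt: "l z - t0 \<le> \<Phi> z" for z
    using maxi[OF cg gE, of z] unfolding g_def by auto
  show ?thesis
  proof (cases "l y0 - E y0 \<le> 0")
    case True
    then have "l x \<le> \<Phi> x" using lt[of x] unfolding t0_def by auto
    with up[OF x] show ?thesis unfolding l_def m_def by linarith
  next
    case False
    then have "l y0 - t0 = E y0" unfolding t0_def by auto
    with lt[of y0] strict[of y0] y0(1) show ?thesis by auto
  qed
qed


lemma main_abs:
  fixes E :: "real \<Rightarrow> real" and a b c k :: real
  assumes contE: "continuous_on UNIV E"
    and LE: "\<And>x. a * x + b \<le> E x"
    and k: "k > 0" and low: "\<And>x. x \<le> c \<Longrightarrow> k * (c - x) \<le> E x - (a * x + b)"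
    and lim: "(\<lambda>n. E (real n) - (a * real n + b)) \<longlonglongrightarrow> 0"
  shows "((\<lambda>y. (conv_minorant E y - conv_minorant E (Zf E c)) / (y - Zf E c))
            \<longlongrightarrow> Inf (subdiff (conv_minorant E) c)) (at_left (Zf E c))"
proof -
  define \<Phi> where "\<Phi> = conv_minorant E"
  define L where "L x = a * x + b" for x
  have cL: "convex_on UNIV L" unfolding L_def by (rule convex_on_affine)
  have LE': "\<And>y. L y \<le> E y" unfolding L_def by (rule LE)
  have cv: "convex_on UNIV \<Phi>" unfolding \<Phi>_def by (rule cm_convex[OF cL LE'])
  have PhiE: "\<And>x. \<Phi> x \<le> E x" unfolding \<Phi>_def by (rule cm_le[OF cL LE'])
  have maxi: "\<And>g x. convex_on UNIV g \<Longrightarrow> (\<forall>y. g y \<le> E y) \<Longrightarrow> g x \<le> \<Phi> x"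
    unfolding \<Phi>_def by (rule cm_ge) auto
  have LPhi: "\<And>x. L x \<le> \<Phi> x" using maxi[OF cL] LE' by auto
  have contP: "continuous_on UNIV \<Phi>" by (rule convex_on_continuous[OF open_UNIV cv])
  have ld: "((\<lambda>y. (\<Phi> y - \<Phi> c) / (y - c)) \<longlongrightarrow> Inf (subdiff \<Phi> c)) (at_left c)"
    by (rule left_deriv[OF cv])
  define T where "T = {z. z \<ge> c \<and> \<Phi> z = E z}"
  have Zdef: "Zf E c = Inf T" unfolding Zf_def T_def \<Phi>_def by simp
  have AL': "\<Phi> x = \<Phi> p + (\<Phi> q - \<Phi> p) / (q - p) * (x - p)"
    if "p < q" "\<And>x. p \<le> x \<Longrightarrow> x \<le> q \<Longrightarrow> \<Phi> x < E x" "p \<le> x" "x \<le> q" for p q x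
    by (rule AL[where \<Phi>=\<Phi> and E=E], rule cv, rule contE, rule PhiE, rule maxi, assumption+, fact+)
  show ?thesis
  proof (cases "\<Phi> c = E c")
    case True
    have "Inf T = c" by (rule cInf_eq_minimum) (use True in \<open>auto simp: T_def\<close>)
    then show ?thesis using ld Zdef unfolding \<Phi>_def by simp
  next
    case False
    then have Pc: "\<Phi> c < E c" using PhiE[of c] by simp
    have Tne: "T \<noteq> {}"
    proof
      assume Te: "T = {}"
      then have str: "\<And>z. c \<le> z \<Longrightarrow> \<Phi> z < E z" using PhiE unfolding T_def
        by (metis (mono_tags, lifting) empty_Collect_eq order_less_le)
      define s where "s = \<Phi> (c + 1) - \<Phi> c"
      have aff: "\<Phi> x = \<Phi> c + s * (x - c)" if "c \<le> x" for x
      proof (cases "x \<le> c + 1")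
        case True
        from AL'[of c "c+1" x] True that str show ?thesis unfolding s_def by simp
      next
        case False
        from AL'[of c x "c+1"] False that str
        have "\<Phi> (c + 1) = \<Phi> c + (\<Phi> x - \<Phi> c) / (x - c)" by simp
        then have "(\<Phi> x - \<Phi> c) / (x - c) = s" unfolding s_def by simp
        then show ?thesis using False by (simp add: divide_eq_eq algebra_simps)
      qed
      define \<alpha> where "\<alpha> = \<Phi> c - L c"
      define \<beta> where "\<beta> = s - a"
      define f where "f n = \<alpha> + \<beta> * (real n - c)" for n
      have fPL: "f n = \<Phi> (real n) - L (real n)" if "c \<le> real n" for n
        using aff[OF that] unfolding f_def \<alpha>_def \<beta>_def L_def by (simp add: algebra_simps)
      have ev: "eventually (\<lambda>n. c \<le> real n) sequentially"
      proof -
        obtain N :: nat where N: "c \<le> real N" using real_arch_simple by blast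
        show ?thesis unfolding eventually_sequentially
          by (intro exI[of _ N] allI impI) (use N in \<open>metis order_trans of_nat_le_iff\<close>)
      qed
      have f0: "f \<longlonglongrightarrow> 0"
      proof (rule tendsto_sandwich[OF _ _ tendsto_const lim])
        show "eventually (\<lambda>n. 0 \<le> f n) sequentially"
          using ev
        proof eventually_elim
          case (elim n) then show ?case using fPL[of n] LPhi[of "real n"] by simp
        qed
        show "eventually (\<lambda>n. f n \<le> E (real n) - (a * real n + b)) sequentially"
          using ev
        proof eventually_elim
          case (elim n) then show ?case using fPL[of n] PhiE[of "real n"] unfolding L_def by simp
        qed
      qed
      have "(\<lambda>n. f (Suc n) - f n) \<longlonglongrightarrow> 0 - 0"
        by (intro tendsto_diff f0 LIMSEQ_Suc)
      moreover have "(\<lambda>n. f (Suc n) - f n) = (\<lambda>n. \<beta>)" unfolding f_def by (auto simp: algebra_simps)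
      ultimately have "(\<lambda>n. \<beta>) \<longlonglongrightarrow> 0" by simp
      then have "\<beta> = 0" by (simp add: LIMSEQ_const_iff)
      then have "f = (\<lambda>n. \<alpha>)" unfolding f_def by auto
      with f0 have "(\<lambda>n. \<alpha>) \<longlonglongrightarrow> 0" by simp
      then have "\<alpha> = 0" by (simp add: LIMSEQ_const_iff)
      then have PcL: "\<Phi> c = L c" unfolding \<alpha>_def by simp
      have pos: "0 < E x - L x" if "c - 1 \<le> x" "x \<le> c + 1" for x
      proof (cases "x < c")
        case True
        then show ?thesis using low[of x] k unfolding L_def by (smt (verit) mult_pos_pos)
      next
        case False
        then show ?thesis using str[of x] LPhi[of x] by simp
      qed
      have contEL: "continuous_on {c-1..c+1} (\<lambda>x. E x - L x)"
        unfolding L_def by (intro continuous_intros continuous_on_subset[OF contE]) auto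
      have "\<exists>y\<in>{c-1..c+1}. \<forall>z\<in>{c-1..c+1}. E y - L y \<le> E z - L z"
        by (rule continuous_attains_inf) (use contEL in auto)
      then obtain y1 where y1: "y1 \<in> {c-1..c+1}" "\<And>z. z \<in> {c-1..c+1} \<Longrightarrow> E y1 - L y1 \<le> E z - L z"
        by blast
      define m where "m = E y1 - L y1"
      have m: "m > 0" unfolding m_def using pos y1(1) by auto
      define \<epsilon> where "\<epsilon> = min m k / 2"
      have eps: "\<epsilon> > 0" "2 * \<epsilon> \<le> m" "2 * \<epsilon> \<le> k" unfolding \<epsilon>_def using m k by auto
      define h where "h x = L x + max (0 * x + 0) ((- \<epsilon>) * x + \<epsilon> * (c + 1))" for x
      have ch: "convex_on UNIV h" unfolding h_def
        by (intro convex_on_add cL convex_on_max2 convex_on_affine)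
      have hE: "\<forall>y. h y \<le> E y"
      proof
        fix y
        show "h y \<le> E y"
        proof (cases "c + 1 \<le> y")
          case True
          then have "\<epsilon> * (c + 1) \<le> \<epsilon> * y" using eps by (intro mult_left_mono) auto
          then have "(- \<epsilon>) * y + \<epsilon> * (c + 1) \<le> 0" by simp
          then show ?thesis unfolding h_def using LE'[of y] by simp
        next
          case nt: False
          show ?thesis
          proof (cases "c - 1 \<le> y")
            case True
            have "(- \<epsilon>) * y + \<epsilon> * (c + 1) = \<epsilon> * (c + 1 - y)" by (simp add: algebra_simps)
            also have "\<dots> \<le> \<epsilon> * 2" using True eps by (intro mult_left_mono) auto
            also have "\<dots> \<le> m" using eps by simp
            also have "\<dots> \<le> E y - L y" unfolding m_def using y1(2)[of y] True nt by auto
            finally show ?thesis unfolding h_def using LE'[of y] by simp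
          next
            case False
            have "(- \<epsilon>) * y + \<epsilon> * (c + 1) = \<epsilon> * (c + 1 - y)" by (simp add: algebra_simps)
            also have "\<dots> \<le> \<epsilon> * (2 * (c - y))" using False eps by (intro mult_left_mono) auto
            also have "\<dots> = (2 * \<epsilon>) * (c - y)" by simp
            also have "\<dots> \<le> k * (c - y)" using False eps by (intro mult_right_mono) auto
            also have "\<dots> \<le> E y - L y" using low[of y] False unfolding L_def by simp
            finally show ?thesis unfolding h_def using LE'[of y] by simp
          qed
        qed
      qed
      have "h c \<le> \<Phi> c" by (rule maxi[OF ch hE])
      moreover have "h c = L c + \<epsilon>" unfolding h_def using eps by (simp add: algebra_simps)
      ultimately show False using PcL eps by simp
    qed
    have clT: "closed T" unfolding T_def
      by (intro closed_Collect_conj closed_Collect_le closed_Collect_eq continuous_intros contP contE)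
    have bddT: "bdd_below T" unfolding T_def by (rule bdd_belowI[of _ c]) auto
    define Z where "Z = Inf T"
    have ZT: "Z \<in> T" unfolding Z_def by (rule closed_contains_Inf[OF Tne bddT clT])
    have cZ: "c < Z" using ZT False unfolding T_def by (auto simp: order_le_less)
    have strZ: "\<Phi> y < E y" if "c \<le> y" "y < Z" for y
    proof -
      have "y \<notin> T" using cInf_lower[OF _ bddT, of y] that unfolding Z_def by auto
      then show ?thesis using that PhiE[of y] unfolding T_def by auto
    qed
    have "isCont (\<lambda>x. E x - \<Phi> x) c"
      using contE contP by (intro continuous_intros) (auto simp: continuous_on_eq_continuous_at)
    then have "(\<lambda>x. E x - \<Phi> x) \<midarrow>c\<rightarrow> E c - \<Phi> c" by (simp add: isCont_def)
    from LIM_fun_gt_zero[OF this] Pc obtain r where r: "r > 0"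
      "\<And>x. x \<noteq> c \<and> \<bar>c - x\<bar> < r \<longrightarrow> 0 < E x - \<Phi> x" by auto
    define p where "p = c - r / 2"
    have pc: "p < c" unfolding p_def using r by simp
    have strp: "\<Phi> y < E y" if "p \<le> y" "y < Z" for y
    proof (cases "c \<le> y")
      case True then show ?thesis using strZ that by auto
    next
      case False
      then have "y \<noteq> c \<and> \<bar>c - y\<bar> < r" using that r(1) unfolding p_def by auto
      then show ?thesis using r(2)[of y] by auto
    qed
    define s where "s = (\<Phi> c - \<Phi> p) / (c - p)"
    have aff: "\<Phi> y = \<Phi> p + s * (y - p)" if "p \<le> y" "y < Z" for y
    proof (cases "y \<le> c")
      case True
      from AL'[of p c y] True that pc strp cZ show ?thesis unfolding s_def by simp
    next
      case False
      from AL'[of p y c] False that pc strp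
      have "\<Phi> c = \<Phi> p + (\<Phi> y - \<Phi> p) / (y - p) * (c - p)" by simp
      then have "\<Phi> c - \<Phi> p = ((\<Phi> y - \<Phi> p) / (y - p)) * (c - p)" by simp
      moreover have "c - p \<noteq> 0" using pc by simp
      ultimately have "(\<Phi> y - \<Phi> p) / (y - p) = s" unfolding s_def by simp
      then show ?thesis using False pc by (simp add: divide_eq_eq algebra_simps)
    qed
    have evZ: "eventually (\<lambda>y. p < y \<and> y < Z) (at_left Z)"
      unfolding eventually_at_left_field using pc cZ by (intro exI[of _ p]) auto
    have "(\<Phi> \<longlongrightarrow> \<Phi> Z) (at_left Z)"
      using contP by (simp add: continuous_on_eq_continuous_at filterlim_at_split isCont_def tendsto_within_subset)
    moreover have "(\<Phi> \<longlongrightarrow> \<Phi> p + s * (Z - p)) (at_left Z)"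
    proof -
      have "((\<lambda>y. \<Phi> p + s * (y - p)) \<longlongrightarrow> \<Phi> p + s * (Z - p)) (at_left Z)"
        by (intro tendsto_intros)
      then show ?thesis
      proof (rule Lim_transform_eventually)
        show "eventually (\<lambda>y. \<Phi> p + s * (y - p) = \<Phi> y) (at_left Z)"
          using evZ
        proof eventually_elim
          case (elim y) then show ?case using aff[of y] by simp
        qed
      qed
    qed
    ultimately have PZ: "\<Phi> Z = \<Phi> p + s * (Z - p)"
      using tendsto_unique[OF trivial_limit_at_left_real] by blast
    have limZ: "((\<lambda>y. (\<Phi> y - \<Phi> Z) / (y - Z)) \<longlongrightarrow> s) (at_left Z)"
    proof (rule Lim_transform_eventually[OF tendsto_const])
      show "eventually (\<lambda>y. s = (\<Phi> y - \<Phi> Z) / (y - Z)) (at_left Z)"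
        using evZ
      proof eventually_elim
        case (elim y)
        then have "\<Phi> y - \<Phi> Z = s * (y - Z)" using aff[of y] PZ by (simp add: algebra_simps)
        then show ?case using elim by simp
      qed
    qed
    have limc: "((\<lambda>y. (\<Phi> y - \<Phi> c) / (y - c)) \<longlongrightarrow> s) (at_left c)"
    proof (rule Lim_transform_eventually[OF tendsto_const])
      have evc: "eventually (\<lambda>y. p < y \<and> y < c) (at_left c)"
        unfolding eventually_at_left_field using pc by (intro exI[of _ p]) auto
      show "eventually (\<lambda>y. s = (\<Phi> y - \<Phi> c) / (y - c)) (at_left c)"
        using evc
      proof eventually_elim
        case (elim y)
        then have "\<Phi> y - \<Phi> c = s * (y - c)" using aff[of y] aff[of c] pc cZ by (simp add: algebra_simps)
        then show ?case using elim by simp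
      qed
    qed
    have "s = Inf (subdiff \<Phi> c)"
      using tendsto_unique[OF trivial_limit_at_left_real limc ld] .
    then show ?thesis using limZ Zdef unfolding Z_def \<Phi>_def by simp
  qed
qed



lemma meas_borel: "sets M = sets borel \<Longrightarrow> f \<in> borel_measurable borel \<Longrightarrow> f \<in> borel_measurable M"
  using measurable_cong_sets[of M borel borel borel] by simp

locale pm =
  fixes M :: "real measure"
  assumes P: "prob_space M" and S: "sets M = sets borel" and I: "integrable M (\<lambda>x. x)"
begin

interpretation prob_space M by (rule P)

lemma intb: "integrable M (\<lambda>x. f x)" if "f \<in> borel_measurable borel" "\<And>x. \<bar>f x\<bar> \<le> a + b * \<bar>x\<bar>"
proof (rule Bochner_Integration.integrable_bound[where f="\<lambda>x. a + b * \<bar>x\<bar>"])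
  show "integrable M (\<lambda>x. a + b * \<bar>x\<bar>)" by (intro Bochner_Integration.integrable_add Bochner_Integration.integrable_mult_right Bochner_Integration.integrable_abs integrable_const I)
  show "f \<in> borel_measurable M" using meas_borel[OF S that(1)] .
  show "AE x in M. norm (f x) \<le> norm (a + b * \<bar>x\<bar>)" using that(2) by (auto intro!: AE_I2 order_trans[OF _ abs_ge_self])
qed

lemma int_put: "integrable M (\<lambda>x. max 0 (k - x))"
  by (rule intb[where a="\<bar>k\<bar>" and b=1]) auto

lemma int_call: "integrable M (\<lambda>x. max 0 (x - k))"
  by (rule intb[where a="\<bar>k\<bar>" and b=1]) auto

lemma put_lip: "\<bar>put_fn M k - put_fn M k'\<bar> \<le> \<bar>k - k'\<bar>"
proof -
  have "put_fn M k - put_fn M k' = (\<integral>x. max 0 (k - x) - max 0 (k' - x) \<partial>M)"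
    unfolding put_fn_def by (rule Bochner_Integration.integral_diff[symmetric]) (rule int_put)+
  also have "\<bar>\<dots>\<bar> \<le> (\<integral>x. \<bar>k - k'\<bar> \<partial>M)"
  proof -
    have i: "integrable M (\<lambda>x. max 0 (k - x) - max 0 (k' - x))"
      using int_put by (intro Bochner_Integration.integrable_diff)
    have "(\<integral>x. max 0 (k - x) - max 0 (k' - x) \<partial>M) \<le> (\<integral>x. \<bar>k - k'\<bar> \<partial>M)"
      using i by (intro Bochner_Integration.integral_mono) auto
    moreover have "(\<integral>x. - \<bar>k - k'\<bar> \<partial>M) \<le> (\<integral>x. max 0 (k - x) - max 0 (k' - x) \<partial>M)"
      using i by (intro Bochner_Integration.integral_mono) auto
    ultimately show ?thesis by (simp add: prob_space)
  qed
  also have "\<dots> = \<bar>k - k'\<bar>" by (simp add: prob_space)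
  finally show ?thesis .
qed

lemma put_cont: "continuous_on UNIV (put_fn M)"
proof (rule lipschitz_on_continuous_on)
  show "1-lipschitz_on UNIV (put_fn M)"
    by (rule lipschitz_onI) (auto simp: dist_real_def put_lip)
qed

lemma put_ge: "k - (\<integral>x. x \<partial>M) \<le> put_fn M k"
proof -
  have "k - (\<integral>x. x \<partial>M) = (\<integral>x. k - x \<partial>M)"
    using I by (simp add: integral_diff prob_space)
  also have "\<dots> \<le> put_fn M k" unfolding put_fn_def
    using I int_put by (intro Bochner_Integration.integral_mono) auto
  finally show ?thesis .
qed

lemma call_eq: "put_fn M k - k + (\<integral>x. x \<partial>M) = (\<integral>x. max 0 (x - k) \<partial>M)"
proof -
  have "(\<integral>x. max 0 (x - k) \<partial>M) = (\<integral>x. max 0 (k - x) - (k - x) \<partial>M)"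
    by (rule Bochner_Integration.integral_cong) auto
  also have "\<dots> = put_fn M k - (\<integral>x. k - x \<partial>M)" unfolding put_fn_def
    using I int_put by (intro Bochner_Integration.integral_diff) auto
  also have "(\<integral>x. k - x \<partial>M) = k - (\<integral>x. x \<partial>M)"
    using I by (simp add: integral_diff prob_space)
  finally show ?thesis by simp
qed

lemma call_lim: "(\<lambda>n. put_fn M (real n) - real n + (\<integral>x. x \<partial>M)) \<longlonglongrightarrow> 0"
proof -
  have "(\<lambda>n. \<integral>x. max 0 (x - real n) \<partial>M) \<longlonglongrightarrow> (\<integral>x. 0 \<partial>M)"
  proof (rule integral_dominated_convergence[where w="\<lambda>x. \<bar>x\<bar>"])
    show "(\<lambda>x. 0::real) \<in> borel_measurable M" by simp
    show "(\<lambda>x. max 0 (x - real n)) \<in> borel_measurable M" for n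
      by (rule meas_borel[OF S]) measurable
    show "integrable M (\<lambda>x. \<bar>x\<bar>)" using I by auto
    show "AE x in M. (\<lambda>n. max 0 (x - real n)) \<longlonglongrightarrow> 0"
    proof (rule AE_I2)
      fix x :: real
      obtain N :: nat where N: "x \<le> real N" using real_arch_simple by blast
      show "(\<lambda>n. max 0 (x - real n)) \<longlonglongrightarrow> 0"
        by (rule tendsto_eventually) (use N in \<open>auto simp: eventually_sequentially intro!: exI[of _ N]\<close>)
    qed
    show "AE x in M. norm (max 0 (x - real n)) \<le> \<bar>x\<bar>" for n
      by (rule AE_I2) auto
  qed
  then show ?thesis using call_eq by simp
qed

end


lemma sig_borel: "sigma_sets (UNIV::real set) (sets borel) = sets borel"
  using sets.sigma_sets_eq[of "borel :: real measure"] by simp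

locale muq = pm \<mu> for \<mu> +
  fixes G :: "real \<Rightarrow> real" and u :: real
  assumes Q: "is_quantile \<mu> G" and U: "u \<in> {0<..<1}"
begin

interpretation prob_space \<mu> by (rule P)

definition "c = G u"
definition "w = u - measure \<mu> {..<c}"
definition "\<theta> = w / measure \<mu> {c}"
definition "g x = indicator {..<c} x + \<theta> * indicator {c} x"

lemma w_nonneg: "0 \<le> w"
  using Q U unfolding is_quantile_def w_def c_def by auto

lemma w_le: "w \<le> measure \<mu> {c}"
proof -
  have "measure \<mu> {..c} = measure \<mu> ({..<c} \<union> {c})" by (metis ivl_disj_un_singleton(2))
  also have "\<dots> = measure \<mu> {..<c} + measure \<mu> {c}"
    by (rule finite_measure_Union) (auto simp: S)
  moreover have "u \<le> measure \<mu> {..c}" using Q U unfolding is_quantile_def c_def by auto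
  ultimately show ?thesis unfolding w_def by simp
qed

lemma theta: "0 \<le> \<theta>" "\<theta> * measure \<mu> {c} = w"
  using w_nonneg w_le unfolding \<theta>_def by auto

lemma g_meas[measurable]: "g \<in> borel_measurable borel"
  unfolding g_def by measurable

lemma g_nonneg: "0 \<le> g x"
  unfolding g_def using theta by auto

lemma space_mu: "space \<mu> = UNIV"
  using sets_eq_imp_space_eq[OF S] by simp

lemma MU: "mu_u \<mu> G u = density \<mu> g"
proof -
  have sp: "space (density \<mu> g) = UNIV" "sets (density \<mu> g) = sets borel" by (auto simp: space_mu S)
  have "density \<mu> g = measure_of UNIV (sets borel) (emeasure (density \<mu> g))"
    using measure_of_of_measure[of "density \<mu> g"] sp by simp
  also have "\<dots> = mu_u \<mu> G u"
    unfolding mu_u_def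
  proof (rule measure_of_eq)
    show "sets borel \<subseteq> Pow UNIV" by auto
    fix a :: "real set" assume "a \<in> sigma_sets UNIV (sets borel)"
    then have a: "a \<in> sets borel" using sig_borel by simp
    have gm: "(\<lambda>x. ennreal (g x)) \<in> borel_measurable \<mu>" by (rule meas_borel[OF S]) measurable
    have "emeasure (density \<mu> g) a = (\<integral>\<^sup>+ x. ennreal (g x) * indicator a x \<partial>\<mu>)"
      using a by (intro emeasure_density) (auto simp: S gm)
    also have "\<dots> = (\<integral>\<^sup>+ x. indicator (a \<inter> {..<c}) x + ennreal \<theta> * indicator (a \<inter> {c}) x \<partial>\<mu>)"
    proof (rule nn_integral_cong)
      fix x
      show "ennreal (g x) * indicator a x = indicator (a \<inter> {..<c}) x + ennreal \<theta> * indicator (a \<inter> {c}) x"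
        unfolding g_def by (cases "x \<in> a"; cases "x < c"; cases "x = c") (auto simp: indicator_def)
    qed
    also have "\<dots> = emeasure \<mu> (a \<inter> {..<c}) + ennreal \<theta> * emeasure \<mu> (a \<inter> {c})"
    proof -
      have s1: "a \<inter> {..<c} \<in> sets \<mu>" "a \<inter> {c} \<in> sets \<mu>" using a by (auto simp: S)
      have m1: "(indicator (a \<inter> {..<c}) :: real \<Rightarrow> ennreal) \<in> borel_measurable \<mu>"
          "(indicator (a \<inter> {c}) :: real \<Rightarrow> ennreal) \<in> borel_measurable \<mu>"
          "(\<lambda>x. ennreal \<theta> * (indicator (a \<inter> {c}) x :: ennreal)) \<in> borel_measurable \<mu>"
        using s1 by (auto intro: borel_measurable_indicator)
      have "(\<integral>\<^sup>+ x. indicator (a \<inter> {..<c}) x + ennreal \<theta> * indicator (a \<inter> {c}) x \<partial>\<mu>)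
          = (\<integral>\<^sup>+ x. indicator (a \<inter> {..<c}) x \<partial>\<mu>) + (\<integral>\<^sup>+ x. ennreal \<theta> * indicator (a \<inter> {c}) x \<partial>\<mu>)"
        using m1 by (intro nn_integral_add) auto
      also have "\<dots> = emeasure \<mu> (a \<inter> {..<c}) + ennreal \<theta> * emeasure \<mu> (a \<inter> {c})"
        using s1 m1 by (simp add: nn_integral_cmult nn_integral_indicator)
      finally show ?thesis .
    qed
    also have "\<dots> = emeasure \<mu> (a \<inter> {..<c}) + ennreal w * indicator a c"
    proof (cases "c \<in> a")
      case True
      then have "a \<inter> {c} = {c}" by auto
      then have "ennreal \<theta> * emeasure \<mu> (a \<inter> {c}) = ennreal w"
        using theta by (simp add: emeasure_eq_measure ennreal_mult[symmetric])
      then show ?thesis using True by simp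
    next
      case False
      then have "a \<inter> {c} = {}" by auto
      then show ?thesis using False by simp
    qed
    finally show "emeasure (density \<mu> g) a = emeasure \<mu> (a \<inter> {..<G u}) + ennreal (u - measure \<mu> {..<G u}) * indicator a (G u)"
      unfolding w_def c_def .
  qed
  finally show ?thesis ..
qed

lemma Pu_int: "put_fn (mu_u \<mu> G u) k = (\<integral>x. g x * max 0 (k - x) \<partial>\<mu>)"
  unfolding put_fn_def MU
  by (subst integral_density) (auto simp: g_nonneg meas_borel[OF S])

lemma F1: "k \<le> c \<Longrightarrow> put_fn (mu_u \<mu> G u) k = put_fn \<mu> k"
  unfolding Pu_int unfolding put_fn_def
  by (rule Bochner_Integration.integral_cong[OF refl]) (auto simp: g_def indicator_def)

lemma int_g: "(\<integral>x. g x \<partial>\<mu>) = u"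
proof -
  have "(\<integral>x. g x \<partial>\<mu>) = (\<integral>x. indicator {..<c} x \<partial>\<mu>) + (\<integral>x. \<theta> * indicator {c} x \<partial>\<mu>)"
    unfolding g_def
    by (rule Bochner_Integration.integral_add) (auto simp: S emeasure_eq_measure intro!: integrable_real_indicator)
  also have "\<dots> = measure \<mu> {..<c} + \<theta> * measure \<mu> {c}"
    by (simp add: space_mu)
  finally show ?thesis using theta unfolding w_def by simp
qed

lemma F2: "\<exists>A. \<forall>k\<ge>c. put_fn (mu_u \<mu> G u) k = u * k - A"
proof (intro exI allI impI)
  fix k assume k: "c \<le> k"
  have ig: "integrable \<mu> g" unfolding g_def
    by (intro Bochner_Integration.integrable_add Bochner_Integration.integrable_mult_right integrable_real_indicator) (auto simp: S emeasure_eq_measure)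
  have igx: "integrable \<mu> (\<lambda>x. g x * x)"
  proof (rule intb[where a=0 and b="1 + \<theta>"])
    show "(\<lambda>x. g x * x) \<in> borel_measurable borel" by measurable
    fix x
    have "g x \<le> 1 + \<theta>" unfolding g_def using theta by (auto simp: indicator_def)
    then have "\<bar>g x\<bar> * \<bar>x\<bar> \<le> (1 + \<theta>) * \<bar>x\<bar>" using g_nonneg[of x] by (intro mult_right_mono) auto
    then show "\<bar>g x * x\<bar> \<le> 0 + (1 + \<theta>) * \<bar>x\<bar>" by (simp add: abs_mult)
  qed
  have "put_fn (mu_u \<mu> G u) k = (\<integral>x. k * g x - g x * x \<partial>\<mu>)"
    unfolding Pu_int
    by (rule Bochner_Integration.integral_cong[OF refl]) (use k in \<open>auto simp: g_def indicator_def algebra_simps max_def\<close>)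
  also have "\<dots> = k * (\<integral>x. g x \<partial>\<mu>) - (\<integral>x. g x * x \<partial>\<mu>)"
    using ig igx by simp
  finally show "put_fn (mu_u \<mu> G u) k = u * k - (\<integral>x. g x * x \<partial>\<mu>)"
    by (simp add: int_g mult.commute)
qed

end


theorem lemma4p3:
  fixes \<mu> \<nu> :: "real measure" and G :: "real \<Rightarrow> real" and u :: real
  assumes "prob_space \<mu>" "sets \<mu> = sets borel" "integrable \<mu> (\<lambda>x. x)"
    and "prob_space \<nu>" "sets \<nu> = sets borel" "integrable \<nu> (\<lambda>x. x)"
    and "cx_le \<mu> \<nu>"
    and "is_interval {k. put_fn \<nu> k - put_fn \<mu> k > 0}"
    and "is_quantile \<mu> G"
    and "u \<in> {0<..<1}"
  shows "((\<lambda>y. (conv_minorant (E_u \<mu> \<nu> G u) y - conv_minorant (E_u \<mu> \<nu> G u) (G u)) / (y - G u))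
            \<longlongrightarrow> Inf (subdiff (conv_minorant (E_u \<mu> \<nu> G u)) (G u))) (at_left (G u))
      \<and> ((\<lambda>y. (conv_minorant (E_u \<mu> \<nu> G u) y
                 - conv_minorant (E_u \<mu> \<nu> G u) (Zf (E_u \<mu> \<nu> G u) (G u)))
               / (y - Zf (E_u \<mu> \<nu> G u) (G u)))
            \<longlongrightarrow> Inf (subdiff (conv_minorant (E_u \<mu> \<nu> G u)) (G u)))
          (at_left (Zf (E_u \<mu> \<nu> G u) (G u)))"
proof -
  interpret Mu: pm \<mu> by (rule pm.intro) (use assms in auto)
  interpret Nu: pm \<nu> by (rule pm.intro) (use assms in auto)
  interpret Q: muq \<mu> G u by (intro muq.intro muq_axioms.intro) (use assms in \<open>auto intro: pm.intro\<close>)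
  define c where "c = G u"
  define E where "E = E_u \<mu> \<nu> G u"
  define Pm where "Pm = put_fn \<mu>"
  define Pn where "Pn = put_fn \<nu>"
  define Pu where "Pu = put_fn (mu_u \<mu> G u)"
  define m\<mu> where "m\<mu> = (\<integral>x. x \<partial>\<mu>)"
  define m\<nu> where "m\<nu> = (\<integral>x. x \<partial>\<nu>)"
  have Edef: "E x = Pn x - Pu x" for x unfolding E_def E_u_def Pn_def Pu_def ..
  obtain A where FA: "\<And>k. c \<le> k \<Longrightarrow> Pu k = u * k - A"
    using Q.F2 unfolding Pu_def Q.c_def c_def by blast
  have F1: "\<And>k. k \<le> c \<Longrightarrow> Pu k = Pm k"
    using Q.F1 unfolding Pu_def Pm_def Q.c_def c_def by blast
  have cx: "(\<integral>x. f x \<partial>\<mu>) \<le> (\<integral>x. f x \<partial>\<nu>)" if "convex_on UNIV f" "integrable \<mu> f" "integrable \<nu> f" for f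
    using assms(7) that unfolding cx_le_def by blast
  have m1: "m\<mu> \<le> m\<nu>" unfolding m\<mu>_def m\<nu>_def
    by (rule cx) (auto simp: assms convex_on_ident)
  have m2: "(\<integral>x. - x \<partial>\<mu>) \<le> (\<integral>x. - x \<partial>\<nu>)"
  proof (rule cx)
    show "convex_on UNIV (\<lambda>x::real. - x)" using convex_on_affine[of "-1" 0] by simp
  qed (auto simp: assms)
  have meq: "m\<mu> = m\<nu>" using m1 m2 unfolding m\<mu>_def m\<nu>_def by simp
  have PmPn: "Pm k \<le> Pn k" for k unfolding Pm_def Pn_def put_fn_def
  proof (rule cx)
    have "convex_on UNIV (\<lambda>x. max (0 * x + 0) ((-1) * x + k))"
      by (intro convex_on_max2 convex_on_affine)
    then show "convex_on UNIV (\<lambda>x::real. max 0 (k - x))" by simp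
  qed (auto intro: Mu.int_put Nu.int_put)
  have Ac: "A = u * c - Pm c" using FA[of c] F1[of c] by simp
  have Pmc: "c - m\<nu> \<le> Pm c" using Mu.put_ge[of c] meq unfolding Pm_def m\<mu>_def by simp
  define a where "a = 1 - u"
  define b where "b = - m\<nu> + A"
  have u01: "0 < u" "u < 1" using assms(10) by auto
  have right: "E x - (a * x + b) = Pn x - x + m\<nu>" if "c \<le> x" for x
    using FA[OF that] unfolding Edef a_def b_def by (simp add: algebra_simps)
  have low: "(1 - u) * (c - x) \<le> E x - (a * x + b)" if "x \<le> c" for x
  proof -
    have "E x - (a * x + b) = (Pn x - Pm x) + (1 - u) * (c - x) + (m\<nu> - c + Pm c)"
      using F1[OF that] Ac unfolding Edef a_def b_def by (simp add: algebra_simps)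
    then show ?thesis using PmPn[of x] Pmc by simp
  qed
  have LE: "a * x + b \<le> E x" for x
  proof (cases "c \<le> x")
    case True
    then show ?thesis using right[OF True] Nu.put_ge[of x] unfolding Pn_def m\<nu>_def by simp
  next
    case False
    then show ?thesis using low[of x] u01 by (smt (verit) mult_nonneg_nonneg)
  qed
  have contPu: "continuous_on UNIV Pu"
  proof -
    have "continuous_on ({..c} \<union> {c..}) Pu"
    proof (rule continuous_on_closed_Un)
      show "continuous_on {..c} Pu"
        using continuous_on_subset[OF Mu.put_cont, of "{..c}"] F1
        by (subst continuous_on_cong[OF refl, where g=Pm]) (auto simp: Pm_def)
      show "continuous_on {c..} Pu"
        using FA by (subst continuous_on_cong[OF refl, where g="\<lambda>k. u * k - A"]) (auto intro!: continuous_intros)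
    qed auto
    moreover have "{..c} \<union> {c..} = (UNIV :: real set)" by auto
    ultimately show ?thesis by simp
  qed
  have contE: "continuous_on UNIV E"
  proof -
    have "E = (\<lambda>x. Pn x - Pu x)" using Edef by auto
    then show ?thesis using Nu.put_cont contPu unfolding Pn_def by (auto intro!: continuous_intros)
  qed
  have lim: "(\<lambda>n. E (real n) - (a * real n + b)) \<longlonglongrightarrow> 0"
  proof (rule Lim_transform_eventually[OF Nu.call_lim])
    obtain N :: nat where N: "c \<le> real N" using real_arch_simple by blast
    show "eventually (\<lambda>n. put_fn \<nu> (real n) - real n + (\<integral>x. x \<partial>\<nu>) = E (real n) - (a * real n + b)) sequentially"
      unfolding eventually_sequentially
    proof (intro exI[of _ N] allI impI)
      fix n assume "N \<le> n"
      then have "c \<le> real n" using N by (meson order_trans of_nat_le_iff)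
      then show "put_fn \<nu> (real n) - real n + (\<integral>x. x \<partial>\<nu>) = E (real n) - (a * real n + b)"
        using right by (simp add: Pn_def m\<nu>_def)
    qed
  qed
  have k: "(0::real) < 1 - u" using u01 by simp
  note part2 = main_abs[OF contE LE k low lim]
  have part1: "((\<lambda>y. (conv_minorant E y - conv_minorant E c) / (y - c)) \<longlongrightarrow> Inf (subdiff (conv_minorant E) c)) (at_left c)"
    by (rule left_deriv[OF cm_convex[of "\<lambda>x. a * x + b" E, OF convex_on_affine LE]])
  show ?thesis using part1 part2 unfolding E_def c_def by simp
qed

end
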